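(* Let $C_\varphi$ be a compact cyclic composition operator on $\mathcal F(\mathbb C^d)$ and let $\mathrm{Cyc}(C_\varphi)$ be its set of cyclic vectors. Then $\mathrm{Cyc}(C_\varphi)\cup\{0\}$ contains no linear subspace of dimension $2$.
   Context: $\mathcal F(\mathbb C^d)$ is the Fock space of entire functions with $\|f\|^2=(2\pi)^{-d}\int_{\mathbb C^d}|f|^2e^{-|z|^2/2}dA<\infty$; $C_\varphi f=f\circ\varphi$; $C_\varphi$ is compact iff $\varphi(z)=Az+b$ with $\|A\|<1$. $x$ is a cyclic vector for $T$ if $\mathrm{span}\{T^nx:n\ge0\}$ is dense. *)

theory Defs
  imports "HOL-Analysis.Analysis"
begin

definition entire_Cd :: "(complex^'d \<Rightarrow> complex) \<Rightarrow> bool" where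
  "entire_Cd f \<longleftrightarrow> (\<forall>z. \<exists>L. (f has_derivative L) (at z) \<and>
      (\<forall>(c::complex) v. L (c *s v) = c * L v))"

definition fock_weight :: "complex^'d \<Rightarrow> real" where
  "fock_weight z = exp (- (norm z)\<^sup>2 / 2)"

definition fock_space :: "(complex^'d \<Rightarrow> complex) set" where
  "fock_space = {f. entire_Cd f \<and>
      integrable lborel (\<lambda>z. (cmod (f z))\<^sup>2 * fock_weight z)}"

definition fock_norm :: "(complex^'d \<Rightarrow> complex) \<Rightarrow> real" where
  "fock_norm f = sqrt ((2 * pi) powi (- int CARD('d)) *
      integral\<^sup>L lborel (\<lambda>z. (cmod (f z))\<^sup>2 * fock_weight z))"

definition holo_map :: "(complex^'d \<Rightarrow> complex^'d) \<Rightarrow> bool" where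
  "holo_map \<phi> \<longleftrightarrow> (\<forall>i. entire_Cd (\<lambda>z. \<phi> z $ i))"

definition comp_op_on_fock :: "(complex^'d \<Rightarrow> complex^'d) \<Rightarrow> bool" where
  "comp_op_on_fock \<phi> \<longleftrightarrow> holo_map \<phi> \<and> (\<forall>f::complex^'d \<Rightarrow> complex\<in>fock_space. f \<circ> \<phi> \<in> fock_space)"

definition compact_comp_op :: "(complex^'d \<Rightarrow> complex^'d) \<Rightarrow> bool" where
  "compact_comp_op \<phi> \<longleftrightarrow> comp_op_on_fock \<phi> \<and>
     (\<forall>s::nat \<Rightarrow> complex^'d \<Rightarrow> complex. (\<forall>n. s n \<in> fock_space \<and> fock_norm (s n) \<le> 1) \<longrightarrow>
        (\<exists>r g. strict_mono r \<and> g \<in> fock_space \<and>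
           (\<lambda>n. fock_norm (\<lambda>z. s (r n) (\<phi> z) - g z)) \<longlonglongrightarrow> 0))"

text \<open>x is a cyclic vector of C_phi: the complex span of {C_phi^n x} is dense in F.
  Note C_phi^n x = x \<circ> phi^n.\<close>
definition cyclic_vec :: "(complex^'d \<Rightarrow> complex^'d) \<Rightarrow> (complex^'d \<Rightarrow> complex) \<Rightarrow> bool" where
  "cyclic_vec \<phi> x \<longleftrightarrow> x \<in> fock_space \<and>
     (\<forall>g::complex^'d \<Rightarrow> complex\<in>fock_space. \<forall>\<epsilon>>0. \<exists>N (c::nat \<Rightarrow> complex).
        fock_norm (\<lambda>z. g z - (\<Sum>k\<le>N. c k * x ((\<phi> ^^ k) z))) < \<epsilon>)"

definition cyclic_op :: "(complex^'d \<Rightarrow> complex^'d) \<Rightarrow> bool" where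
  "cyclic_op \<phi> \<longleftrightarrow> (\<exists>x. cyclic_vec \<phi> x)"

end

theory Submission imports Defs "HOL-Probability.Distributions" "HOL-Complex_Analysis.Cauchy_Integral_Formula" "HOL-Real_Asymp.Real_Asymp" begin

lemma lborel_distr_basis_iso:
  fixes T :: "'a::euclidean_space \<Rightarrow> 'b::euclidean_space" and S :: "'b \<Rightarrow> 'a"
  assumes linT: "linear T" and linS: "linear S"
    and inv1: "\<And>x. S (T x) = x" and inv2: "\<And>y. T (S y) = y"
    and inn: "\<And>x y. T x \<bullet> T y = x \<bullet> y" and B: "T ` Basis = Basis"
  shows "distr lborel borel T = lborel"
proof (rule lborel_eqI[symmetric])
  have cT: "continuous_on UNIV T"
    using linT by (simp add: linear_continuous_on linear_conv_bounded_linear)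
  then have mT: "T \<in> borel_measurable borel"
    by (rule borel_measurable_continuous_onI)
  have key: "S y \<bullet> b = y \<bullet> T b" for y b
    using inn[of "S y" b] inv2 by simp
  fix l u :: 'b assume le: "\<And>b. b \<in> Basis \<Longrightarrow> l \<bullet> b \<le> u \<bullet> b"
  have pre: "T -` box l u = box (S l) (S u)"
  proof -
    have "x \<in> box (S l) (S u) \<longleftrightarrow> T x \<in> box l u" for x
    proof -
      have "x \<in> box (S l) (S u) \<longleftrightarrow> (\<forall>b\<in>Basis. l \<bullet> T b < T x \<bullet> T b \<and> T x \<bullet> T b < u \<bullet> T b)"
        by (simp add: mem_box key inn)
      also have "\<dots> \<longleftrightarrow> (\<forall>b\<in>T ` Basis. l \<bullet> b < T x \<bullet> b \<and> T x \<bullet> b < u \<bullet> b)"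
        by auto
      also have "\<dots> \<longleftrightarrow> T x \<in> box l u" by (simp add: B mem_box)
      finally show ?thesis .
    qed
    then show ?thesis by auto
  qed
  have le2: "S l \<bullet> b \<le> S u \<bullet> b" if "b \<in> Basis" for b
    using le[of "T b"] that B by (auto simp: key)
  have injT: "inj_on T Basis"
    by (metis inj_on_inverseI inv1)
  have "emeasure (distr lborel borel T) (box l u) = emeasure lborel (T -` box l u)"
    by (subst emeasure_distr) (auto simp: mT)
  also have "\<dots> = ennreal (\<Prod>b\<in>Basis. (S u - S l) \<bullet> b)"
    unfolding pre by (rule emeasure_lborel_box) (rule le2)
  also have "(\<Prod>b\<in>Basis. (S u - S l) \<bullet> b) = (\<Prod>b\<in>Basis. (u - l) \<bullet> T b)"
    by (simp add: key inner_diff_left)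
  also have "\<dots> = (\<Prod>b\<in>T ` Basis. (u - l) \<bullet> b)"
    by (subst prod.reindex[OF injT]) simp
  finally show "emeasure (distr lborel borel T) (box l u) = (\<Prod>b\<in>Basis. (u - l) \<bullet> b)"
    by (simp add: B)
qed simp

definition iota :: "complex^'d \<Rightarrow> (real^'d) \<times> (real^'d)" where
  "iota z = ((\<chi> j. Re (z $ j)), (\<chi> j. Im (z $ j)))"

definition kappa :: "(real^'d) \<times> (real^'d) \<Rightarrow> complex^'d" where
  "kappa p = (\<chi> j. Complex (fst p $ j) (snd p $ j))"

lemma iota_kappa: "iota (kappa p) = p" "kappa (iota z) = z"
  by (auto simp: iota_def kappa_def vec_eq_iff prod_eq_iff complex_eq_iff)

lemma linear_iota: "linear iota"
  by (rule linearI) (auto simp: iota_def vec_eq_iff)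

lemma linear_kappa: "linear kappa"
  by (rule linearI) (auto simp: kappa_def vec_eq_iff complex_eq_iff)

lemma inner_iota: "iota x \<bullet> iota y = x \<bullet> y"
  by (simp add: iota_def inner_prod_def inner_vec_def inner_complex_def sum.distrib[symmetric])

lemma iota_Basis: "iota ` (Basis :: (complex^'d) set) = Basis"
proof -
  have a1: "iota (axis i 1 :: complex^'d) = (axis i 1, 0)" for i
    by (auto simp: iota_def vec_eq_iff axis_def)
  have a2: "iota (axis i \<i> :: complex^'d) = (0, axis i 1)" for i
    by (auto simp: iota_def vec_eq_iff axis_def)
  show ?thesis
    unfolding Basis_vec_def Basis_prod_def Basis_complex_def
    by (auto simp: a1 a2 image_iff Basis_real_def)
qed

lemma lborel_iota: "distr lborel borel (iota :: complex^'d \<Rightarrow> _) = lborel"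
  by (rule lborel_distr_basis_iso[where S=kappa])
     (auto simp: linear_iota linear_kappa iota_kappa inner_iota iota_Basis)

lemma nn_integral_lborel_translate:
  fixes f :: "'a::euclidean_space \<Rightarrow> ennreal"
  assumes f: "f \<in> borel_measurable borel"
  shows "(\<integral>\<^sup>+x. f (x + c) \<partial>lborel) = (\<integral>\<^sup>+x. f x \<partial>lborel)"
proof -
  have "(\<integral>\<^sup>+x. f x \<partial>lborel) = (\<integral>\<^sup>+x. f x \<partial>(distr lborel borel ((+) c)))"
    by (simp add: lborel_distr_plus)
  also have "\<dots> = (\<integral>\<^sup>+x. f (c + x) \<partial>lborel)"
    by (subst nn_integral_distr) (auto simp: f)
  finally show ?thesis by (simp add: add.commute)
qed

definition shear1 :: "real \<Rightarrow> ('a::euclidean_space \<times> 'a) \<Rightarrow> ('a \<times> 'a)" where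
  "shear1 a p = (fst p + a *\<^sub>R snd p, snd p)"
definition shear2 :: "real \<Rightarrow> ('a::euclidean_space \<times> 'a) \<Rightarrow> ('a \<times> 'a)" where
  "shear2 a p = (fst p, snd p + a *\<^sub>R fst p)"

lemma cont_shear1: "continuous_on UNIV (shear1 a)"
  unfolding shear1_def by (intro continuous_intros)
lemma cont_shear2: "continuous_on UNIV (shear2 a)"
  unfolding shear2_def by (intro continuous_intros)

lemma meas_shear1 [measurable]: "shear1 a \<in> borel_measurable borel"
  by (rule borel_measurable_continuous_onI[OF cont_shear1])
lemma meas_shear2 [measurable]: "shear2 a \<in> borel_measurable borel"
  by (rule borel_measurable_continuous_onI[OF cont_shear2])

lemma lborel_shear1: "distr lborel borel (shear1 a :: ('a::euclidean_space \<times> 'a) \<Rightarrow> _) = lborel"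
proof (rule measure_eqI)
  fix A :: "('a \<times> 'a) set" assume "A \<in> sets (distr lborel borel (shear1 a))"
  then have A[measurable]: "A \<in> sets borel" by simp
  have "emeasure (distr lborel borel (shear1 a)) A = (\<integral>\<^sup>+p. indicator A p \<partial>distr lborel borel (shear1 a))"
    by (simp add: nn_integral_indicator)
  also have "\<dots> = (\<integral>\<^sup>+p. indicator A (shear1 a p) \<partial>lborel)"
    by (subst nn_integral_distr) auto
  also have "\<dots> = (\<integral>\<^sup>+p. indicator A (shear1 a p) \<partial>(lborel \<Otimes>\<^sub>M lborel))"
    by (simp add: lborel_prod)
  also have "\<dots> = (\<integral>\<^sup>+y. \<integral>\<^sup>+x. indicator A (shear1 a (x, y)) \<partial>lborel \<partial>lborel)"
    by (rule lborel_pair.nn_integral_snd[symmetric]) (simp add: lborel_prod measurable_lborel1)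
  also have "\<dots> = (\<integral>\<^sup>+y. \<integral>\<^sup>+x. indicator A (x + a *\<^sub>R y, y) \<partial>lborel \<partial>lborel)"
    by (simp add: shear1_def)
  also have "\<dots> = (\<integral>\<^sup>+y. \<integral>\<^sup>+x. indicator A (x, y) \<partial>lborel \<partial>lborel)"
    by (rule nn_integral_cong, rule nn_integral_lborel_translate[where f="\<lambda>x. indicator A (x, _)"]) simp
  also have "\<dots> = (\<integral>\<^sup>+p. indicator A p \<partial>(lborel \<Otimes>\<^sub>M lborel))"
    by (rule lborel_pair.nn_integral_snd) (simp add: lborel_prod measurable_lborel1)
  also have "\<dots> = emeasure lborel A"
    by (simp add: lborel_prod nn_integral_indicator)
  finally show "emeasure (distr lborel borel (shear1 a)) A = emeasure lborel A" .
qed simp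

lemma lborel_shear2: "distr lborel borel (shear2 a :: ('a::euclidean_space \<times> 'a) \<Rightarrow> _) = lborel"
proof (rule measure_eqI)
  fix A :: "('a \<times> 'a) set" assume "A \<in> sets (distr lborel borel (shear2 a))"
  then have A[measurable]: "A \<in> sets borel" by simp
  have "emeasure (distr lborel borel (shear2 a)) A = (\<integral>\<^sup>+p. indicator A p \<partial>distr lborel borel (shear2 a))"
    by (simp add: nn_integral_indicator)
  also have "\<dots> = (\<integral>\<^sup>+p. indicator A (shear2 a p) \<partial>lborel)"
    by (subst nn_integral_distr) auto
  also have "\<dots> = (\<integral>\<^sup>+p. indicator A (shear2 a p) \<partial>(lborel \<Otimes>\<^sub>M lborel))"
    by (simp add: lborel_prod)
  also have "\<dots> = (\<integral>\<^sup>+x. \<integral>\<^sup>+y. indicator A (shear2 a (x, y)) \<partial>lborel \<partial>lborel)"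
    by (rule lborel.nn_integral_fst[of "\<lambda>p. indicator A (shear2 a p)" lborel, symmetric]) (simp add: lborel_prod measurable_lborel1)
  also have "\<dots> = (\<integral>\<^sup>+x. \<integral>\<^sup>+y. indicator A (x, y + a *\<^sub>R x) \<partial>lborel \<partial>lborel)"
    by (simp add: shear2_def)
  also have "\<dots> = (\<integral>\<^sup>+x. \<integral>\<^sup>+y. indicator A (x, y) \<partial>lborel \<partial>lborel)"
    by (rule nn_integral_cong, rule nn_integral_lborel_translate[where f="\<lambda>y. indicator A (_, y)"]) simp
  also have "\<dots> = (\<integral>\<^sup>+p. indicator A p \<partial>(lborel \<Otimes>\<^sub>M lborel))"
    by (rule lborel.nn_integral_fst) (simp add: lborel_prod measurable_lborel1)
  also have "\<dots> = emeasure lborel A"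
    by (simp add: lborel_prod nn_integral_indicator)
  finally show "emeasure (distr lborel borel (shear2 a)) A = emeasure lborel A" .
qed simp

lemma lborel_distr_comp:
  fixes f :: "'b::euclidean_space \<Rightarrow> 'c::euclidean_space" and g :: "'a::euclidean_space \<Rightarrow> 'b"
  assumes "distr lborel borel f = lborel" "distr lborel borel g = lborel"
    and "continuous_on UNIV f" "continuous_on UNIV g"
  shows "distr lborel borel (f \<circ> g) = lborel"
proof -
  have mf: "f \<in> borel \<rightarrow>\<^sub>M borel" and mg: "g \<in> lborel \<rightarrow>\<^sub>M borel"
    using assms(3,4) by (auto intro: borel_measurable_continuous_onI)
  have "distr lborel borel (f \<circ> g) = distr (distr lborel borel g) borel f"
    by (rule distr_distr[symmetric, OF mf mg])
  also have "\<dots> = lborel" using assms(1,2) by simp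
  finally show ?thesis .
qed

definition rot :: "real \<Rightarrow> ('a::euclidean_space \<times> 'a) \<Rightarrow> ('a \<times> 'a)" where
  "rot t p = (cos t *\<^sub>R fst p - sin t *\<^sub>R snd p, sin t *\<^sub>R fst p + cos t *\<^sub>R snd p)"

lemma rot_shears:
  assumes "cos (t/2) \<noteq> 0"
  shows "rot t = shear1 (- tan (t/2)) \<circ> shear2 (sin t) \<circ> shear1 (- tan (t/2))"
proof -
  define h where "h = t/2"
  have t: "t = 2*h" by (simp add: h_def)
  have c: "cos h \<noteq> 0" using assms by (simp add: h_def)
  have sc: "(sin h)\<^sup>2 + (cos h)\<^sup>2 = 1" by simp
  have e1: "1 - sin t * tan h = cos t"
    using c sc unfolding t sin_double cos_double tan_def
    by (simp add: field_simps power2_eq_square)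
  have f0: "cos h * (cos h * (sin h * 2)) + sin h * (sin h * (sin h * 2)) = sin h * 2 * ((sin h)\<^sup>2 + (cos h)\<^sup>2)"
    by algebra
  have f: "cos h * (cos h * (sin h * 2)) + sin h * (sin h * (sin h * 2)) = sin h * 2"
    by (metis f0 sc mult_1_right)
  have e2: "- tan h - tan h * (1 - sin t * tan h) = - sin t"
    using c unfolding t sin_double cos_double tan_def
    by (simp add: field_simps power2_eq_square) (metis f)
  show ?thesis
  proof
    fix p :: "'a \<times> 'a"
    obtain x y where p: "p = (x, y)" by fastforce
    have e3: "- tan h - tan h * cos t = - sin t" using e1 e2 by simp
    have "(shear1 (- tan (t/2)) \<circ> shear2 (sin t) \<circ> shear1 (- tan (t/2))) p
      = ((1 - sin t * tan h) *\<^sub>R x + (- tan h - tan h * (1 - sin t * tan h)) *\<^sub>R y,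
         sin t *\<^sub>R x + (1 - sin t * tan h) *\<^sub>R y)"
      by (simp add: p shear1_def shear2_def h_def[symmetric] algebra_simps flip: scaleR_add_left)
    also have "\<dots> = rot t p" by (simp add: e1 e3 p rot_def)
    finally show "rot t p = (shear1 (- tan (t/2)) \<circ> shear2 (sin t) \<circ> shear1 (- tan (t/2))) p" by simp
  qed
qed

lemma lborel_rot:
  assumes "cos (t/2) \<noteq> 0"
  shows "distr lborel borel (rot t :: ('a::euclidean_space \<times> 'a) \<Rightarrow> _) = lborel"
proof -
  have c2: "continuous_on UNIV (shear2 (sin t) \<circ> shear1 (- tan (t/2)) :: ('a \<times> 'a) \<Rightarrow> _)"
    by (rule continuous_on_compose[OF cont_shear1]) (meson cont_shear2 continuous_on_subset subset_UNIV)
  have "distr lborel borel (shear2 (sin t) \<circ> shear1 (- tan (t/2)) :: ('a \<times> 'a) \<Rightarrow> _) = lborel"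
    by (rule lborel_distr_comp[OF lborel_shear2 lborel_shear1 cont_shear2 cont_shear1])
  then show ?thesis
    unfolding rot_shears[OF assms] comp_assoc
    by (rule lborel_distr_comp[OF lborel_shear1 _ cont_shear1 c2])
qed

lemma kappa_Basis: "kappa ` Basis = (Basis :: (complex^'d) set)"
proof -
  have "kappa ` (Basis :: ((real^'d) \<times> (real^'d)) set) = kappa ` iota ` (Basis :: (complex^'d) set)"
    by (simp add: iota_Basis)
  also have "\<dots> = Basis" by (simp add: image_comp iota_kappa comp_def)
  finally show ?thesis .
qed

lemma inner_kappa: "kappa x \<bullet> kappa y = x \<bullet> y"
  by (metis inner_iota iota_kappa(1))

lemma lborel_kappa: "distr lborel borel (kappa :: _ \<Rightarrow> complex^'d) = lborel"
  by (rule lborel_distr_basis_iso[where S=iota])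
     (auto simp: linear_iota linear_kappa iota_kappa inner_kappa kappa_Basis)

lemma cont_iota: "continuous_on UNIV iota"
  using linear_iota linear_conv_bounded_linear linear_continuous_on by blast
lemma cont_kappa: "continuous_on UNIV kappa"
  using linear_kappa linear_conv_bounded_linear linear_continuous_on by blast
lemma cont_rot: "continuous_on UNIV (rot t)"
  unfolding rot_def by (intro continuous_intros)

lemma cis_smult_eq: "(\<lambda>z::complex^'d. cis t *s z) = kappa \<circ> (rot t \<circ> iota)"
  by (auto simp: kappa_def rot_def iota_def vec_eq_iff complex_eq_iff cis.ctr)

lemma lborel_cis:
  assumes "cos (t/2) \<noteq> 0"
  shows "distr lborel borel (\<lambda>z::complex^'d. cis t *s z) = lborel"
proof -
  have r: "distr lborel borel (rot t \<circ> (iota :: complex^'d \<Rightarrow> _)) = lborel"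
    by (rule lborel_distr_comp[OF lborel_rot[OF assms] lborel_iota cont_rot cont_iota])
  have c: "continuous_on UNIV (rot t \<circ> (iota :: complex^'d \<Rightarrow> _))"
    by (rule continuous_on_compose[OF cont_iota]) (meson cont_rot continuous_on_subset subset_UNIV)
  show ?thesis unfolding cis_smult_eq
    by (rule lborel_distr_comp[OF lborel_kappa r cont_kappa c])
qed

lemma linear_smult: "linear (\<lambda>z::complex^'d. c *s z)"
  by (rule linearI) (auto simp: vec_eq_iff algebra_simps scaleR_conv_of_real)

lemma cont_smult: "continuous_on UNIV (\<lambda>z::complex^'d. c *s z)"
  using linear_smult linear_conv_bounded_linear linear_continuous_on by blast

lemma lborel_unit:
  assumes u: "cmod u = 1"
  shows "distr lborel borel (\<lambda>z::complex^'d. u *s z) = lborel"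
proof -
  define h where "h = Arg u / 2"
  have "u \<noteq> 0" using u by auto
  then have "cis (Arg u) = u" using u by (simp add: cis_Arg sgn_div_norm)
  then have uh: "u = cis h * cis h" by (simp add: h_def cis_mult)
  have hb: "- pi \<le> Arg u" "Arg u \<le> pi" using Arg_bounded[of u] by auto
  have hb2: "-(pi/2) < h/2" "h/2 < pi/2" using hb pi_gt_zero unfolding h_def by linarith+
  have "cos (h/2) > 0" by (rule cos_gt_zero_pi[OF hb2])
  then have l: "distr lborel borel (\<lambda>z::complex^'d. cis h *s z) = lborel"
    by (intro lborel_cis) simp
  have eq: "(\<lambda>z::complex^'d. u *s z) = (\<lambda>z. cis h *s z) \<circ> (\<lambda>z. cis h *s z)"
    by (auto simp: uh vector_smult_assoc)
  show ?thesis unfolding eq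
    by (rule lborel_distr_comp[OF l l cont_smult cont_smult])
qed

lemma mp_integral:
  fixes T :: "'a::euclidean_space \<Rightarrow> 'a" and f :: "'a \<Rightarrow> 'b::{banach, second_countable_topology}"
  assumes "distr lborel borel T = lborel" "continuous_on UNIV T" "f \<in> borel_measurable borel"
  shows "integral\<^sup>L lborel (\<lambda>x. f (T x)) = integral\<^sup>L lborel f"
    and "integrable lborel (\<lambda>x. f (T x)) \<longleftrightarrow> integrable lborel f"
proof -
  have mT: "T \<in> lborel \<rightarrow>\<^sub>M borel" using assms(2) by (simp add: borel_measurable_continuous_onI)
  show "integral\<^sup>L lborel (\<lambda>x. f (T x)) = integral\<^sup>L lborel f"
    using integral_distr[OF mT assms(3)] assms(1) by simp
  show "integrable lborel (\<lambda>x. f (T x)) \<longleftrightarrow> integrable lborel f"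
    using integrable_distr_eq[OF mT assms(3)] assms(1) by simp
qed

lemma translate_integral:
  fixes f :: "'a::euclidean_space \<Rightarrow> 'b::{banach, second_countable_topology}"
  assumes "f \<in> borel_measurable borel"
  shows "integral\<^sup>L lborel (\<lambda>x. f (x + c)) = integral\<^sup>L lborel f"
    and "integrable lborel (\<lambda>x. f (x + c)) \<longleftrightarrow> integrable lborel f"
proof -
  have e: "(\<lambda>x. f (x + c)) = (\<lambda>x. f ((+) c x))" by (simp add: add.commute)
  have c: "continuous_on UNIV ((+) c)" by (intro continuous_intros)
  show "integral\<^sup>L lborel (\<lambda>x. f (x + c)) = integral\<^sup>L lborel f"
    unfolding e by (rule mp_integral(1)[OF lborel_distr_plus c assms])
  show "integrable lborel (\<lambda>x. f (x + c)) \<longleftrightarrow> integrable lborel f"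
    unfolding e by (rule mp_integral(2)[OF lborel_distr_plus c assms])
qed

lemma nn_gauss: "(\<integral>\<^sup>+x. ennreal (exp (- (x\<^sup>2 / 2))) \<partial>lborel) = ennreal (sqrt (2 * pi))"
proof -
  have nd: "normal_density 0 1 x = exp (- x\<^sup>2 / 2) / sqrt (2 * pi)" for x
    by (simp add: normal_density_def)
  have i: "integrable lborel (\<lambda>x. sqrt (2 * pi) * normal_density 0 1 x)" by simp
  have "(\<integral>\<^sup>+x. ennreal (exp (- (x\<^sup>2 / 2))) \<partial>lborel) = (\<integral>\<^sup>+x. ennreal (sqrt (2 * pi) * normal_density 0 1 x) \<partial>lborel)"
    by (simp add: nd)
  also have "\<dots> = ennreal (integral\<^sup>L lborel (\<lambda>x. sqrt (2 * pi) * normal_density 0 1 x))"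
    by (rule nn_integral_eq_integral[OF i]) simp
  also have "\<dots> = ennreal (sqrt (2 * pi))" by simp
  finally show ?thesis .
qed

lemma fock_weight_prod: "fock_weight z = (\<Prod>b\<in>Basis. exp (- (z \<bullet> b)\<^sup>2 / 2))"
proof -
  have "(norm z)\<^sup>2 = (\<Sum>b\<in>Basis. (z \<bullet> b)\<^sup>2)"
    unfolding power2_norm_eq_inner by (subst euclidean_inner) (simp add: power2_eq_square)
  then have "- (norm z)\<^sup>2 / 2 = (\<Sum>b\<in>Basis. - (z \<bullet> b)\<^sup>2 / 2)"
    unfolding sum_divide_distrib[symmetric] sum_negf by simp
  then show ?thesis by (simp add: fock_weight_def exp_sum)
qed

lemma cont_fock_weight: "continuous_on UNIV fock_weight"
  unfolding fock_weight_def by (intro continuous_intros) auto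

lemma meas_fock_weight [measurable]: "fock_weight \<in> borel_measurable borel"
  by (rule borel_measurable_continuous_onI[OF cont_fock_weight])

lemma nn_fock_weight: "(\<integral>\<^sup>+z. ennreal (fock_weight (z::complex^'d)) \<partial>lborel) = ennreal (sqrt (2*pi) ^ DIM(complex^'d))"
proof -
  have "(\<integral>\<^sup>+z. ennreal (fock_weight (z::complex^'d)) \<partial>lborel)
     = (\<integral>\<^sup>+z. (\<Prod>b\<in>Basis. ennreal (exp (- (z \<bullet> b)\<^sup>2 / 2))) \<partial>(lborel :: (complex^'d) measure))"
    by (simp add: fock_weight_prod prod_ennreal)
  also have "\<dots> = (\<Prod>b\<in>(Basis :: (complex^'d) set). (\<integral>\<^sup>+x. ennreal (exp (- x\<^sup>2 / 2)) \<partial>lborel))"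
    by (rule nn_integral_lborel_prod) auto
  also have "\<dots> = ennreal (sqrt (2*pi) ^ DIM(complex^'d))"
    by (simp add: nn_gauss prod_ennreal ennreal_power)
  finally show ?thesis .
qed

lemma integrable_fock_weight: "integrable lborel (fock_weight :: complex^'d \<Rightarrow> real)"
proof (rule integrableI_bounded)
  have "norm (fock_weight z) = fock_weight z" for z :: "complex^'d" by (simp add: fock_weight_def)
  then show "(\<integral>\<^sup>+z. ennreal (norm (fock_weight (z::complex^'d))) \<partial>lborel) < \<infinity>"
    by (simp add: nn_fock_weight)
qed simp

lemma W_pos: "integral\<^sup>L lborel (fock_weight :: complex^'d \<Rightarrow> real) > 0"
proof -
  have "integral\<^sup>L lborel (fock_weight :: complex^'d \<Rightarrow> real) = enn2real (\<integral>\<^sup>+z. ennreal (fock_weight (z::complex^'d)) \<partial>lborel)"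
    by (rule integral_eq_nn_integral) (auto simp: fock_weight_def)
  also have "\<dots> = sqrt (2*pi) ^ DIM(complex^'d)" by (simp add: nn_fock_weight)
  finally show ?thesis by simp
qed

lemma circle_mean:
  assumes g: "g holomorphic_on UNIV"
  shows "((\<lambda>t. g (cis (2*pi*t))) has_integral g 0) {0..1}"
proof -
  have "g holomorphic_on cball 0 1" using g by (rule holomorphic_on_subset) auto
  from Cauchy_integral_circlepath_simple[OF this, of 0]
  have "((\<lambda>u. g u / (u - 0)) has_contour_integral 2 * complex_of_real pi * \<i> * g 0) (circlepath 0 1)"
    by simp
  then have h: "((\<lambda>x. g (circlepath 0 1 x) / circlepath 0 1 x * vector_derivative (circlepath 0 1) (at x within {0..1}))
        has_integral 2 * complex_of_real pi * \<i> * g 0) {0..1}"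
    by (simp add: has_contour_integral_def)
  have e: "cis (2*pi*x) = exp (2 * of_real pi * \<i> * of_real x)" for x
    by (simp add: cis_conv_exp mult_ac)
  have "((\<lambda>x. (2 * complex_of_real pi * \<i>) * g (cis (2*pi*x))) has_integral 2 * complex_of_real pi * \<i> * g 0) {0..1}"
  proof (rule has_integral_spike_finite[OF _ _ h, of "{}"])
    fix x :: real assume x: "x \<in> {0..1} - {}"
    then have vd: "vector_derivative (circlepath 0 1) (at x within {0..1}) = 2 * pi * \<i> * cis (2*pi*x)"
      by (simp add: vector_derivative_circlepath01 e)
    from x show "2 * complex_of_real pi * \<i> * g (cis (2 * pi * x)) = g (circlepath 0 1 x) / circlepath 0 1 x * vector_derivative (circlepath 0 1) (at x within {0..1})"
      by (simp only: vd) (simp add: circlepath e[symmetric] cis_neq_zero)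
  qed simp
  then have "((\<lambda>x. inverse (2 * complex_of_real pi * \<i>) * ((2 * complex_of_real pi * \<i>) * g (cis (2*pi*x))))
     has_integral inverse (2 * complex_of_real pi * \<i>) * (2 * complex_of_real pi * \<i> * g 0)) {0..1}"
    by (rule has_integral_mult_right)
  then show ?thesis by (simp add: field_simps)
qed

lemma inner_unit_smult:
  fixes z :: "complex^'d"
  assumes "cmod u = 1"
  shows "(u *s z) \<bullet> (u *s z) = z \<bullet> z"
  unfolding inner_vec_def by (simp add: power2_norm_eq_inner[symmetric] norm_mult assms)

lemma fock_weight_unit: "cmod u = 1 \<Longrightarrow> fock_weight (u *s z) = fock_weight z"
  by (simp add: fock_weight_def power2_norm_eq_inner inner_unit_smult)

lemma fock_weight_pos: "fock_weight z > 0"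
  by (simp add: fock_weight_def)

lemma mean_value:
  fixes G :: "complex^'d \<Rightarrow> complex"
  assumes cG: "continuous_on UNIV G"
    and hG: "\<And>z. (\<lambda>t. G (t *s z)) holomorphic_on UNIV"
    and iG: "integrable lborel (\<lambda>z. G z * complex_of_real (fock_weight z))"
  shows "integral\<^sup>L lborel (\<lambda>z. G z * complex_of_real (fock_weight z))
         = G 0 * complex_of_real (integral\<^sup>L lborel (fock_weight :: complex^'d \<Rightarrow> real))"
proof -
  define H where "H z = G z * complex_of_real (fock_weight z)" for z
  define I where "I = integral\<^sup>L lborel H"
  have cH: "continuous_on UNIV H"
    unfolding H_def by (intro continuous_intros cG) (rule continuous_on_subset[OF cont_fock_weight], simp)
  have mH[measurable]: "H \<in> borel_measurable borel"
    by (rule borel_measurable_continuous_onI[OF cH])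
  have iH: "integrable lborel H" using iG by (simp add: H_def[abs_def])
  have mnH[measurable]: "(\<lambda>z. norm (H z)) \<in> borel_measurable borel" by measurable
  have u1: "cmod (cis (2*pi*t)) = 1" for t by simp
  have Hrot: "G (cis (2*pi*t) *s z) * complex_of_real (fock_weight z) = H (cis (2*pi*t) *s z)" for t z
    by (simp add: H_def fock_weight_unit[OF u1])
  have rot_int: "integral\<^sup>L lborel (\<lambda>z. H (cis (2*pi*t) *s z)) = I"
    and rot_intb: "integrable lborel (\<lambda>z. H (cis (2*pi*t) *s z))"
    and rot_intn: "integral\<^sup>L lborel (\<lambda>z. norm (H (cis (2*pi*t) *s z))) = integral\<^sup>L lborel (\<lambda>z. norm (H z))" for t
    using mp_integral[OF lborel_unit[OF u1] cont_smult mH] mp_integral[OF lborel_unit[OF u1] cont_smult mnH]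
      iH by (auto simp: I_def)
  define F where "F t z = indicator {0..1::real} t *\<^sub>R H (cis (2*pi*t) *s z)" for t z
  have cF: "continuous_on UNIV (\<lambda>p::real \<times> (complex^'d). H (cis (2*pi*fst p) *s snd p))"
  proof -
    have "continuous_on UNIV (\<lambda>p::real \<times> (complex^'d). cis (2*pi*fst p) *s snd p)"
      unfolding vector_scalar_mult_def
      by (intro continuous_on_vec_lambda continuous_intros)
    then show ?thesis
      by (rule continuous_on_compose2[OF cH]) auto
  qed
  have mF: "(\<lambda>p. F (fst p) (snd p)) \<in> borel_measurable (lborel \<Otimes>\<^sub>M lborel)"
  proof -
    have m1: "(\<lambda>p::real \<times> (complex^'d). H (cis (2*pi*fst p) *s snd p)) \<in> borel_measurable borel"
      by (rule borel_measurable_continuous_onI[OF cF])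
    have m2: "(\<lambda>p::real \<times> (complex^'d). indicator {0..1::real} (fst p) :: real) \<in> borel_measurable borel"
    proof -
      have "(\<lambda>p::real \<times> (complex^'d). indicator {0..1::real} (fst p) :: real) = indicator ({0..1} \<times> UNIV)"
        by (auto simp: indicator_def fun_eq_iff)
      then show ?thesis by (simp add: borel_measurable_indicator closed_Times)
    qed
    show ?thesis unfolding F_def lborel_prod measurable_lborel2
      using m2 m1 by (rule borel_measurable_scaleR)
  qed
  have intF: "integrable (lborel \<Otimes>\<^sub>M lborel) (\<lambda>(t, z). F t z)"
  proof -
    have "integrable (lborel \<Otimes>\<^sub>M lborel) (\<lambda>p. F (fst p) (snd p))"
    proof (rule lborel_pair.Fubini_integrable[OF mF])
      have "(\<lambda>t. LBINT z. norm (F (fst (t, z)) (snd (t, z))))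
          = (\<lambda>t. indicator {0..1::real} t *\<^sub>R integral\<^sup>L lborel (\<lambda>z. norm (H z)))"
        by (auto simp: F_def rot_intn indicator_def)
      then show "integrable lborel (\<lambda>t. LBINT z. norm (F (fst (t, z)) (snd (t, z))))"
        by simp
      show "AE t in lborel. integrable lborel (\<lambda>z. F (fst (t, z)) (snd (t, z)))"
        by (auto simp: F_def rot_intb)
    qed
    then show ?thesis by (simp add: case_prod_beta')
  qed
  have eqz: "(LBINT t. F t z) = G 0 * complex_of_real (fock_weight z)" for z :: "complex^'d"
  proof -
    have hol: "(\<lambda>t. G (t *s z)) holomorphic_on UNIV" by (rule hG)
    have cont: "continuous_on {0..1} (\<lambda>t::real. G (cis (2*pi*t) *s z))"
    proof -
      have c1: "continuous_on UNIV (\<lambda>t::real. cis (2*pi*t))"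
        unfolding cis_conv_exp by (intro continuous_intros)
      have "continuous_on UNIV (\<lambda>t::real. G (cis (2*pi*t) *s z))"
        using continuous_on_compose2[OF holomorphic_on_imp_continuous_on[OF hol] c1] by simp
      then show ?thesis by (rule continuous_on_subset) auto
    qed
    have si: "set_integrable lborel {0..1::real} (\<lambda>t. G (cis (2*pi*t) *s z))"
      unfolding set_integrable_def by (rule borel_integrable_compact[OF compact_Icc cont])
    have "(LBINT t. F t z) = (LBINT t. indicator {0..1::real} t *\<^sub>R G (cis (2*pi*t) *s z)) * complex_of_real (fock_weight z)"
    proof -
      have "(LBINT t. F t z) = (LBINT t. (indicator {0..1::real} t *\<^sub>R G (cis (2*pi*t) *s z)) * complex_of_real (fock_weight z))"
        by (simp add: F_def H_def fock_weight_unit[OF u1])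
      also have "\<dots> = (LBINT t. indicator {0..1::real} t *\<^sub>R G (cis (2*pi*t) *s z)) * complex_of_real (fock_weight z)"
        by (rule integral_mult_left_zero)
      finally show ?thesis .
    qed
    also have "(LBINT t. indicator {0..1::real} t *\<^sub>R G (cis (2*pi*t) *s z)) = integral {0..1} (\<lambda>t. G (cis (2*pi*t) *s z))"
      using set_borel_integral_eq_integral(2)[OF si] by (simp add: set_lebesgue_integral_def)
    also have "\<dots> = G (0 *s z)"
      using circle_mean[OF hol] by (simp add: integral_unique)
    finally show ?thesis
      by (simp add: vector_smult_lzero)
  qed
  have "(LBINT z. LBINT t. F t z) = (LBINT t. LBINT z. F t z)"
    by (rule lborel_pair.Fubini_integral[OF intF])
  also have "(LBINT t. LBINT z. F t z) = (LBINT t. indicator {0..1::real} t *\<^sub>R I)"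
    by (auto simp: F_def rot_int)
  also have "\<dots> = I" by simp
  also have "(LBINT z. LBINT t. F t z) = (LBINT z::complex^'d. G 0 * complex_of_real (fock_weight z))"
    by (simp add: eqz)
  also have "\<dots> = G 0 * complex_of_real (integral\<^sup>L lborel (fock_weight :: complex^'d \<Rightarrow> real))"
    by simp
  finally show ?thesis by (simp add: I_def H_def[abs_def])
qed

lemma cmod_diff_sq: "(cmod (a - b))\<^sup>2 = (cmod a)\<^sup>2 - 2 * Re (cnj b * a) + (cmod b)\<^sup>2"
  unfolding cmod_power2 by (simp add: power2_eq_square algebra_simps)

lemma le_sq_1: "(x::real) \<le> x\<^sup>2 + 1"
proof -
  have "0 \<le> (x - 1/2)\<^sup>2" by simp
  moreover have "(x - 1/2)\<^sup>2 = x\<^sup>2 - x + 1/4" by (simp add: power2_eq_square algebra_simps)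
  ultimately show ?thesis by linarith
qed

lemma Re_mult_ofr: "Re (a * complex_of_real r) = Re a * r"
  by simp

lemma sub_mean:
  fixes G :: "complex^'d \<Rightarrow> complex"
  assumes cG: "continuous_on UNIV G"
    and hG: "\<And>z. (\<lambda>t. G (t *s z)) holomorphic_on UNIV"
    and iG: "integrable lborel (\<lambda>z. (cmod (G z))\<^sup>2 * fock_weight z)"
  shows "(cmod (G 0))\<^sup>2 * integral\<^sup>L lborel (fock_weight :: complex^'d \<Rightarrow> real)
         \<le> integral\<^sup>L lborel (\<lambda>z. (cmod (G z))\<^sup>2 * fock_weight z)"
proof -
  define W where "W = integral\<^sup>L lborel (fock_weight :: complex^'d \<Rightarrow> real)"
  define c where "c = G 0"
  have cw: "continuous_on UNIV fock_weight" by (rule cont_fock_weight)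
  have mGw: "(\<lambda>z. G z * complex_of_real (fock_weight z)) \<in> borel_measurable lborel"
    unfolding measurable_lborel2
    by (rule borel_measurable_continuous_onI) (intro continuous_intros cG cw)
  have iW: "integrable lborel (fock_weight :: complex^'d \<Rightarrow> real)" by (rule integrable_fock_weight)
  have iGw: "integrable lborel (\<lambda>z. G z * complex_of_real (fock_weight z))"
  proof (rule Bochner_Integration.integrable_bound[OF _ mGw])
    show "integrable lborel (\<lambda>z. (cmod (G z))\<^sup>2 * fock_weight z + fock_weight z)"
      using iG iW by simp
    show "AE z in lborel. norm (G z * complex_of_real (fock_weight z)) \<le> norm ((cmod (G z))\<^sup>2 * fock_weight z + fock_weight z)"
    proof (rule AE_I2)
      fix z :: "complex^'d"
      have p: "fock_weight z > 0" by (rule fock_weight_pos)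
      have "cmod (G z) \<le> (cmod (G z))\<^sup>2 + 1"
        by (rule le_sq_1)
      then have "cmod (G z) * fock_weight z \<le> ((cmod (G z))\<^sup>2 + 1) * fock_weight z"
        using p by (intro mult_right_mono) auto
      then show "norm (G z * complex_of_real (fock_weight z)) \<le> norm ((cmod (G z))\<^sup>2 * fock_weight z + fock_weight z)"
        using p by (simp add: norm_mult algebra_simps)
    qed
  qed
  have mv: "integral\<^sup>L lborel (\<lambda>z. G z * complex_of_real (fock_weight z)) = c * complex_of_real W"
    unfolding c_def W_def by (rule mean_value[OF cG hG iGw])
  have i2: "integrable lborel (\<lambda>z. Re (cnj c * (G z * complex_of_real (fock_weight z))))"
    by (rule integrable_Re[OF integrable_mult_right[OF iGw]])
  have i3: "integrable lborel (\<lambda>z::complex^'d. (cmod c)\<^sup>2 * fock_weight z)" using iW by simp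
  have e2: "integral\<^sup>L lborel (\<lambda>z. Re (cnj c * (G z * complex_of_real (fock_weight z)))) = (cmod c)\<^sup>2 * W"
  proof -
    have "integral\<^sup>L lborel (\<lambda>z. Re (cnj c * (G z * complex_of_real (fock_weight z))))
        = Re (integral\<^sup>L lborel (\<lambda>z. cnj c * (G z * complex_of_real (fock_weight z))))"
      by (rule integral_Re[OF integrable_mult_right[OF iGw]])
    also have "\<dots> = Re (cnj c * (c * complex_of_real W))" by (simp only: integral_mult_right_zero mv)
    also have "\<dots> = (cmod c)\<^sup>2 * W" unfolding cmod_power2 by (simp add: power2_eq_square algebra_simps)
    finally show ?thesis .
  qed
  define f1 where "f1 z = (cmod (G z))\<^sup>2 * fock_weight z" for z
  define f2 where "f2 z = Re (cnj c * (G z * complex_of_real (fock_weight z)))" for z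
  define f3 where "f3 z = (cmod c)\<^sup>2 * fock_weight z" for z :: "complex^'d"
  have i1': "integrable lborel f1" using iG by (simp add: f1_def[abs_def])
  have i2': "integrable lborel f2" using i2 by (simp add: f2_def[abs_def])
  have i3': "integrable lborel f3" using i3 by (simp add: f3_def[abs_def])
  have pt: "(cmod (G z - c))\<^sup>2 * fock_weight z = (f1 z - 2 * f2 z) + f3 z" for z
  proof -
    have "f2 z = Re (cnj c * G z) * fock_weight z"
      unfolding f2_def by (simp only: mult.assoc[symmetric] Re_mult_ofr)
    then show ?thesis
      unfolding f1_def f3_def cmod_diff_sq by (simp add: left_diff_distrib distrib_right)
  qed
  have "0 \<le> integral\<^sup>L lborel (\<lambda>z. (cmod (G z - c))\<^sup>2 * fock_weight z)"
    by (rule integral_nonneg_AE) (simp add: fock_weight_def)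
  also have "\<dots> = integral\<^sup>L lborel (\<lambda>z. (f1 z - 2 * f2 z) + f3 z)"
    by (simp only: pt)
  also have "\<dots> = integral\<^sup>L lborel (\<lambda>z. f1 z - 2 * f2 z) + integral\<^sup>L lborel f3"
    by (rule Bochner_Integration.integral_add) (use i1' i2' i3' in auto)
  also have "integral\<^sup>L lborel (\<lambda>z. f1 z - 2 * f2 z) = integral\<^sup>L lborel f1 - integral\<^sup>L lborel (\<lambda>z. 2 * f2 z)"
    by (rule Bochner_Integration.integral_diff) (use i1' i2' in auto)
  also have "integral\<^sup>L lborel (\<lambda>z. 2 * f2 z) = 2 * ((cmod c)\<^sup>2 * W)"
  proof -
    have "integral\<^sup>L lborel f2 = (cmod c)\<^sup>2 * W" unfolding f2_def[abs_def] by (rule e2)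
    then show ?thesis by (simp only: integral_mult_right_zero)
  qed
  also have "integral\<^sup>L lborel f3 = (cmod c)\<^sup>2 * W"
    by (simp add: f3_def[abs_def] W_def)
  finally show ?thesis by (simp add: W_def c_def f1_def[abs_def] mult.commute)
qed

definition ip :: "complex^'d \<Rightarrow> complex^'d \<Rightarrow> complex" where
  "ip z v = (\<Sum>j\<in>UNIV. z $ j * cnj (v $ j))"

lemma Re_ip: "Re (ip z v) = z \<bullet> v"
  by (simp add: ip_def inner_vec_def inner_complex_def)

lemma ip_smult: "ip (t *s z) v = t * ip z v"
  by (simp add: ip_def sum_distrib_left mult_ac)

lemma cont_ip: "continuous_on UNIV (\<lambda>z. ip z v)"
  unfolding ip_def by (intro continuous_intros)

lemma ip_self: "ip v v = complex_of_real ((norm v)\<^sup>2)"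
proof -
  have "ip v v = (\<Sum>j\<in>UNIV. complex_of_real ((cmod (v $ j))\<^sup>2))"
    unfolding ip_def by (rule sum.cong) (auto simp: complex_norm_square[symmetric] simp del: of_real_power)
  also have "\<dots> = complex_of_real ((norm v)\<^sup>2)"
    by (simp add: power2_norm_eq_inner inner_vec_def)
  finally show ?thesis .
qed

lemma ent_cont: "entire_Cd f \<Longrightarrow> continuous_on UNIV f"
  unfolding entire_Cd_def
  by (metis continuous_at_imp_continuous_on has_derivative_continuous)

lemma linear_smult_left: "linear (\<lambda>s::complex. s *s (z::complex^'d))"
  by (rule linearI) (simp_all add: vec_eq_iff vector_add_component vector_scaleR_component vector_smult_component algebra_simps)

lemma ent_line:
  assumes "entire_Cd f"
  shows "(\<lambda>t. f (t *s z + v)) holomorphic_on UNIV"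
  unfolding holomorphic_on_def
proof
  fix t0 :: complex
  obtain L where L: "(f has_derivative L) (at (t0 *s z + v))" and hom: "\<And>(c::complex) u. L (c *s u) = c * L u"
    using assms unfolding entire_Cd_def by blast
  have bl: "bounded_linear (\<lambda>s::complex. s *s z)"
    using linear_smult_left linear_conv_bounded_linear by blast
  have d1: "((\<lambda>t. t *s z + v) has_derivative (\<lambda>s. s *s z)) (at t0)"
    using has_derivative_add_const[OF bounded_linear_imp_has_derivative[OF bl], of v] by simp
  have "((\<lambda>t. f (t *s z + v)) has_derivative (\<lambda>s. L (s *s z))) (at t0)"
    using has_derivative_compose[OF d1 L] by (simp add: comp_def)
  moreover have "(\<lambda>s. L (s *s z)) = (*) (L z)" by (auto simp: fun_eq_iff hom mult.commute)
  ultimately have "((\<lambda>t. f (t *s z + v)) has_derivative (*) (L z)) (at t0)"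
    by simp
  then show "(\<lambda>t. f (t *s z + v)) field_differentiable at t0 within UNIV"
    unfolding field_differentiable_def has_field_derivative_def by blast
qed

lemma norm_add_sq: "(norm (z + v))\<^sup>2 = (norm z)\<^sup>2 + 2 * (z \<bullet> v) + (norm v)\<^sup>2"
  for z v :: "'a::real_inner"
  by (simp add: power2_norm_eq_inner inner_add_left inner_add_right inner_commute)

lemma cont_comp_ent: "entire_Cd h \<Longrightarrow> continuous_on UNIV (\<lambda>z. h (z + v))"
  by (rule continuous_on_compose2[OF ent_cont]) (auto intro!: continuous_intros)

lemma point_eval:
  fixes h :: "complex^'d \<Rightarrow> complex"
  assumes hF: "h \<in> fock_space"
  shows "(cmod (h v))\<^sup>2 * integral\<^sup>L lborel (fock_weight :: complex^'d \<Rightarrow> real)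
         \<le> exp ((norm v)\<^sup>2 / 2) * integral\<^sup>L lborel (\<lambda>z. (cmod (h z))\<^sup>2 * fock_weight z)"
proof -
  have eh: "entire_Cd h" and ih: "integrable lborel (\<lambda>z. (cmod (h z))\<^sup>2 * fock_weight z)"
    using hF by (auto simp: fock_space_def)
  define G where "G z = h (z + v) * exp (- ip z v / 2)" for z
  have cG: "continuous_on UNIV G"
    unfolding G_def by (intro continuous_intros cont_comp_ent[OF eh] continuous_on_compose2[OF cont_ip]) auto
  have hG: "(\<lambda>t. G (t *s z)) holomorphic_on UNIV" for z
  proof -
    have eq: "(\<lambda>t. G (t *s z)) = (\<lambda>t. h (t *s z + v) * exp (- (t * ip z v) / 2))"
      by (simp add: G_def ip_smult)
    show ?thesis unfolding eq
      by (intro holomorphic_intros ent_line[OF eh]) auto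
  qed
  define J where "J = integral\<^sup>L lborel (\<lambda>z. (cmod (h z))\<^sup>2 * fock_weight z)"
  have key: "(cmod (G z))\<^sup>2 * fock_weight z = exp ((norm v)\<^sup>2 / 2) * ((cmod (h (z + v)))\<^sup>2 * fock_weight (z + v))" for z
  proof -
    have "cmod (exp (- ip z v / 2)) = exp (- (z \<bullet> v) / 2)"
      by (simp add: norm_exp_eq_Re Re_ip)
    then have "(cmod (exp (- ip z v / 2)))\<^sup>2 = exp (- (z \<bullet> v))"
      by (simp add: power2_eq_square exp_add[symmetric])
    then have "(cmod (G z))\<^sup>2 * fock_weight z = (cmod (h (z + v)))\<^sup>2 * (exp (- (z \<bullet> v)) * exp (- (norm z)\<^sup>2 / 2))"
      by (simp add: G_def norm_mult power_mult_distrib fock_weight_def)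
    also have "exp (- (z \<bullet> v)) * exp (- (norm z)\<^sup>2 / 2) = exp ((norm v)\<^sup>2 / 2) * fock_weight (z + v)"
      by (simp add: fock_weight_def norm_add_sq exp_add[symmetric] field_simps inner_commute)
    finally show ?thesis by (simp add: mult_ac)
  qed
  have mh: "(\<lambda>z. (cmod (h z))\<^sup>2 * fock_weight z) \<in> borel_measurable borel"
    by (rule borel_measurable_continuous_onI) (intro continuous_intros ent_cont[OF eh] cont_fock_weight)
  have tr1: "integral\<^sup>L lborel (\<lambda>z. (cmod (h (z + v)))\<^sup>2 * fock_weight (z + v)) = J"
    using translate_integral(1)[OF mh, of v] by (simp add: J_def)
  have tr2: "integrable lborel (\<lambda>z. (cmod (h (z + v)))\<^sup>2 * fock_weight (z + v))"
    using translate_integral(2)[OF mh, of v] ih by simp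
  have iG: "integrable lborel (\<lambda>z. (cmod (G z))\<^sup>2 * fock_weight z)"
    unfolding key using tr2 by simp
  have "(cmod (G 0))\<^sup>2 * integral\<^sup>L lborel (fock_weight :: complex^'d \<Rightarrow> real)
         \<le> integral\<^sup>L lborel (\<lambda>z. (cmod (G z))\<^sup>2 * fock_weight z)"
    by (rule sub_mean[OF cG hG iG])
  also have "\<dots> = exp ((norm v)\<^sup>2 / 2) * J"
    unfolding key by (simp add: tr1)
  finally show ?thesis by (simp add: G_def ip_def J_def)
qed

lemma fock_norm_sq:
  assumes "h \<in> fock_space"
  shows "(fock_norm h)\<^sup>2 = (2 * pi) powi (- int CARD('d)) * integral\<^sup>L lborel (\<lambda>z::complex^'d. (cmod (h z))\<^sup>2 * fock_weight z)"
proof -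
  have "0 \<le> integral\<^sup>L lborel (\<lambda>z::complex^'d. (cmod (h z))\<^sup>2 * fock_weight z)"
    by (rule integral_nonneg_AE) (simp add: fock_weight_def)
  moreover have "0 \<le> (2 * pi) powi (- int CARD('d))" by simp
  ultimately show ?thesis unfolding fock_norm_def by simp
qed

lemma point_eval2:
  fixes h :: "complex^'d \<Rightarrow> complex"
  assumes hF: "h \<in> fock_space"
  shows "(cmod (h v))\<^sup>2 * integral\<^sup>L lborel (fock_weight :: complex^'d \<Rightarrow> real)
         \<le> exp ((norm v)\<^sup>2 / 2) * (2 * pi) ^ CARD('d) * (fock_norm h)\<^sup>2"
proof -
  have "(2 * pi :: real) ^ CARD('d) * (2 * pi) powi (- int CARD('d)) = 1"
    by (simp add: power_int_minus field_simps)
  then have e: "(2 * pi) ^ CARD('d) * (fock_norm h)\<^sup>2 = integral\<^sup>L lborel (\<lambda>z::complex^'d. (cmod (h z))\<^sup>2 * fock_weight z)"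
    by (simp add: fock_norm_sq[OF hF] mult.assoc[symmetric])
  show ?thesis using point_eval[OF hF, of v] by (simp only: mult.assoc e)
qed

lemma ent_const: "entire_Cd (\<lambda>z. c)"
  unfolding entire_Cd_def by (auto intro!: exI[of _ "\<lambda>_. 0"])

lemma ent_lin:
  assumes "entire_Cd f" "entire_Cd g"
  shows "entire_Cd (\<lambda>z. a * f z + b * g z)"
  unfolding entire_Cd_def
proof
  fix z
  obtain L1 where L1: "(f has_derivative L1) (at z)" "\<And>(c::complex) v. L1 (c *s v) = c * L1 v"
    using assms(1) unfolding entire_Cd_def by blast
  obtain L2 where L2: "(g has_derivative L2) (at z)" "\<And>(c::complex) v. L2 (c *s v) = c * L2 v"
    using assms(2) unfolding entire_Cd_def by blast
  have "((\<lambda>z. a * f z + b * g z) has_derivative (\<lambda>h. a * L1 h + b * L2 h)) (at z)"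
    by (intro has_derivative_add has_derivative_mult_right L1 L2)
  moreover have "\<forall>(c::complex) v. a * L1 (c *s v) + b * L2 (c *s v) = c * (a * L1 v + b * L2 v)"
    by (simp add: L1 L2 algebra_simps)
  ultimately show "\<exists>L. ((\<lambda>z. a * f z + b * g z) has_derivative L) (at z) \<and> (\<forall>(c::complex) v. L (c *s v) = c * L v)"
    by blast
qed

lemma cmod_add_sq_le: "(cmod (x + y))\<^sup>2 \<le> 2 * (cmod x)\<^sup>2 + 2 * (cmod y)\<^sup>2"
proof -
  have "cmod (x + y) \<le> cmod x + cmod y" by (rule norm_triangle_ineq)
  then have "(cmod (x + y))\<^sup>2 \<le> (cmod x + cmod y)\<^sup>2" by (simp add: power_mono)
  also have "\<dots> \<le> 2 * (cmod x)\<^sup>2 + 2 * (cmod y)\<^sup>2"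
  proof -
    have "0 \<le> (cmod x - cmod y)\<^sup>2" by simp
    then show ?thesis by (simp add: power2_eq_square algebra_simps)
  qed
  finally show ?thesis .
qed

lemma fock_meas:
  "entire_Cd f \<Longrightarrow> (\<lambda>z. (cmod (f z))\<^sup>2 * fock_weight z) \<in> borel_measurable lborel"
  unfolding measurable_lborel2
  by (rule borel_measurable_continuous_onI) (intro continuous_intros ent_cont cont_fock_weight)

lemma fock_lin:
  fixes f g :: "complex^'d \<Rightarrow> complex"
  assumes f: "f \<in> fock_space" and g: "g \<in> fock_space"
  shows "(\<lambda>z. a * f z + b * g z) \<in> fock_space"
proof -
  have ef: "entire_Cd f" and ifw: "integrable lborel (\<lambda>z. (cmod (f z))\<^sup>2 * fock_weight z)"
    using f by (auto simp: fock_space_def)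
  have eg: "entire_Cd g" and igw: "integrable lborel (\<lambda>z. (cmod (g z))\<^sup>2 * fock_weight z)"
    using g by (auto simp: fock_space_def)
  have e: "entire_Cd (\<lambda>z. a * f z + b * g z)" by (rule ent_lin[OF ef eg])
  have "integrable lborel (\<lambda>z. (cmod (a * f z + b * g z))\<^sup>2 * fock_weight z)"
  proof (rule Bochner_Integration.integrable_bound[OF _ fock_meas[OF e]])
    show "integrable lborel (\<lambda>z. 2 * (cmod a)\<^sup>2 * ((cmod (f z))\<^sup>2 * fock_weight z) + 2 * (cmod b)\<^sup>2 * ((cmod (g z))\<^sup>2 * fock_weight z))"
      using ifw igw by simp
    show "AE z in lborel. norm ((cmod (a * f z + b * g z))\<^sup>2 * fock_weight z)
        \<le> norm (2 * (cmod a)\<^sup>2 * ((cmod (f z))\<^sup>2 * fock_weight z) + 2 * (cmod b)\<^sup>2 * ((cmod (g z))\<^sup>2 * fock_weight z))"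
    proof (rule AE_I2)
      fix z :: "complex^'d"
      have p: "fock_weight z > 0" by (rule fock_weight_pos)
      have "(cmod (a * f z + b * g z))\<^sup>2 * fock_weight z \<le> (2 * (cmod (a * f z))\<^sup>2 + 2 * (cmod (b * g z))\<^sup>2) * fock_weight z"
        using cmod_add_sq_le p by (intro mult_right_mono) auto
      also have "\<dots> = 2 * (cmod a)\<^sup>2 * ((cmod (f z))\<^sup>2 * fock_weight z) + 2 * (cmod b)\<^sup>2 * ((cmod (g z))\<^sup>2 * fock_weight z)"
        by (simp add: norm_mult power_mult_distrib algebra_simps)
      finally show "norm ((cmod (a * f z + b * g z))\<^sup>2 * fock_weight z)
        \<le> norm (2 * (cmod a)\<^sup>2 * ((cmod (f z))\<^sup>2 * fock_weight z) + 2 * (cmod b)\<^sup>2 * ((cmod (g z))\<^sup>2 * fock_weight z))"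
        using p by simp
    qed
  qed
  then show ?thesis using e by (simp add: fock_space_def)
qed

lemma fock_const: "(\<lambda>z::complex^'d. c) \<in> fock_space"
  using integrable_mult_right[OF integrable_fock_weight, of "(cmod c)\<^sup>2"]
  by (simp add: fock_space_def ent_const)

lemma fock_diff: "(f::complex^'d \<Rightarrow> complex) \<in> fock_space \<Longrightarrow> g \<in> fock_space \<Longrightarrow> (\<lambda>z. f z - g z) \<in> fock_space"
  using fock_lin[of f g 1 "-1"] by simp

lemma fock_scale: "(f::complex^'d \<Rightarrow> complex) \<in> fock_space \<Longrightarrow> (\<lambda>z. a * f z) \<in> fock_space"
  using fock_lin[of f f a 0] by simp

lemma fock_sum:
  fixes f :: "nat \<Rightarrow> complex^'d \<Rightarrow> complex" and N :: nat
  assumes "\<And>k. f k \<in> fock_space"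
  shows "(\<lambda>z. \<Sum>k\<le>N. c k * f k z) \<in> fock_space"
proof (induction N)
  case 0
  then show ?case using fock_scale[OF assms[of 0], of "c 0"] by simp
next
  case (Suc N)
  have "(\<lambda>z. 1 * (\<Sum>k\<le>N. c k * f k z) + c (Suc N) * f (Suc N) z) \<in> fock_space"
    by (rule fock_lin[OF Suc assms])
  then show ?case by simp
qed

lemma fock_iter:
  assumes "comp_op_on_fock \<phi>" "x \<in> fock_space"
  shows "(\<lambda>z. x ((\<phi> ^^ k) z)) \<in> fock_space"
  using assms(2)
proof (induction k arbitrary: x)
  case 0
  then show ?case by simp
next
  case (Suc k)
  have "(\<lambda>z. x ((\<phi> ^^ k) z)) \<circ> \<phi> \<in> fock_space"
    using Suc assms(1) by (simp add: comp_op_on_fock_def)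
  then show ?case by (simp add: funpow_Suc_right comp_def del: funpow.simps)
qed

lemma fock_norm_nonneg: "fock_norm (h :: complex^'d \<Rightarrow> complex) \<ge> 0"
proof -
  have "0 \<le> integral\<^sup>L lborel (\<lambda>z::complex^'d. (cmod (h z))\<^sup>2 * fock_weight z)"
    by (rule integral_nonneg_AE) (simp add: fock_weight_def)
  then show ?thesis unfolding fock_norm_def by simp
qed

lemma funpow_fix: "\<phi> z0 = z0 \<Longrightarrow> (\<phi> ^^ k) z0 = z0"
  by (induction k) auto

lemma not_cyclic:
  fixes \<phi> :: "complex^'d \<Rightarrow> complex^'d"
  assumes cop: "comp_op_on_fock \<phi>" and fix0: "\<phi> z0 = z0" and x0: "x z0 = 0"
  shows "\<not> cyclic_vec \<phi> x"
proof
  assume cyc: "cyclic_vec \<phi> x"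
  then have xF: "x \<in> fock_space" by (simp add: cyclic_vec_def)
  define W where "W = integral\<^sup>L lborel (fock_weight :: complex^'d \<Rightarrow> real)"
  define C where "C = exp ((norm z0)\<^sup>2 / 2) * (2 * pi) ^ CARD('d)"
  have Wp: "W > 0" unfolding W_def by (rule W_pos)
  have Cp: "C > 0" unfolding C_def by simp
  define \<epsilon> where "\<epsilon> = sqrt (W / C)"
  have ep: "\<epsilon> > 0" unfolding \<epsilon>_def using Wp Cp by simp
  have H: "\<forall>g\<in>fock_space. \<forall>\<epsilon>>0. \<exists>N c. fock_norm (\<lambda>z. g z - (\<Sum>k\<le>N. c k * x ((\<phi> ^^ k) z))) < \<epsilon>"
    using cyc by (simp add: cyclic_vec_def)
  from H[rule_format, OF fock_const[of 1] ep] obtain N c where Nc: "fock_norm (\<lambda>z. 1 - (\<Sum>k\<le>N. c k * x ((\<phi> ^^ k) z))) < \<epsilon>"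
    by blast
  define D where "D z = 1 - (\<Sum>k\<le>N. c k * x ((\<phi> ^^ k) z))" for z
  have DF: "D \<in> fock_space"
    unfolding D_def[abs_def]
    by (rule fock_diff[OF fock_const fock_sum]) (rule fock_iter[OF cop xF])
  have D0: "D z0 = 1" using funpow_fix[of \<phi> z0] fix0 by (simp add: D_def x0)
  have "(cmod (D z0))\<^sup>2 * W \<le> C * (fock_norm D)\<^sup>2"
    using point_eval2[OF DF, of z0] by (simp add: W_def C_def)
  then have "W \<le> C * (fock_norm D)\<^sup>2" using D0 by simp
  moreover have "fock_norm D \<ge> 0" by (rule fock_norm_nonneg)
  moreover have "fock_norm D < \<epsilon>" using Nc by (simp add: D_def[abs_def])
  ultimately have "W < C * \<epsilon>\<^sup>2"
    by (smt (verit, best) Cp mult_strict_left_mono power_strict_mono zero_less_numeral)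
  also have "C * \<epsilon>\<^sup>2 = W" unfolding \<epsilon>_def using Wp Cp by simp
  finally show False by simp
qed

lemma scaleR_vec_smult: "r *\<^sub>R (b::complex^'d) = complex_of_real r *s b"
  unfolding vec_eq_iff vector_scaleR_component vector_smult_component by (simp add: scaleR_conv_of_real)

lemma ip_add: "ip (x + y) v = ip x v + ip y v"
  by (simp add: ip_def sum.distrib ring_distribs)

lemma linear_ip2: "linear (\<lambda>z::complex^'d. ip z v / 2)"
proof (rule linearI)
  show "ip (b1 + b2) v / 2 = ip b1 v / 2 + ip b2 v / 2" for b1 b2 :: "complex^'d"
    by (simp add: ip_add add_divide_distrib)
  show "ip (r *\<^sub>R b) v / 2 = r *\<^sub>R (ip b v / 2)" for r and b :: "complex^'d"
    unfolding scaleR_vec_smult ip_smult by (simp add: scaleR_conv_of_real)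
qed

lemma ent_kf: "entire_Cd (\<lambda>z::complex^'d. A * exp (ip z v / 2 + B))"
  unfolding entire_Cd_def
proof
  fix z :: "complex^'d"
  define q where "q z = ip z v / 2 + B" for z
  have bl: "bounded_linear (\<lambda>z::complex^'d. ip z v / 2)"
    using linear_ip2 linear_conv_bounded_linear by blast
  have dq: "(q has_derivative (\<lambda>h. ip h v / 2)) (at z)"
    unfolding q_def[abs_def] by (rule has_derivative_add_const[OF bounded_linear_imp_has_derivative[OF bl]])
  have de: "(exp has_derivative (*) (exp (q z))) (at (q z))"
    using DERIV_exp[of "q z"] by (simp add: has_field_derivative_def)
  have "((\<lambda>z. exp (q z)) has_derivative (\<lambda>h. exp (q z) * (ip h v / 2))) (at z)"
    using has_derivative_compose[OF dq de] by (simp add: comp_def)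
  then have "((\<lambda>z. A * exp (q z)) has_derivative (\<lambda>h. A * (exp (q z) * (ip h v / 2)))) (at z)"
    by (rule has_derivative_mult_right)
  moreover have "\<forall>(c::complex) h. A * (exp (q z) * (ip (c *s h) v / 2)) = c * (A * (exp (q z) * (ip h v / 2)))"
    by (simp add: ip_smult)
  ultimately show "\<exists>L. ((\<lambda>z. A * exp (ip z v / 2 + B)) has_derivative L) (at z) \<and> (\<forall>(c::complex) h. L (c *s h) = c * L h)"
    unfolding q_def by blast
qed

definition kf :: "real \<Rightarrow> complex^'d \<Rightarrow> complex^'d \<Rightarrow> complex" where
  "kf a v z = complex_of_real a * exp (ip z v / 2 + complex_of_real (- (norm v)\<^sup>2 / 4))"

lemma cmod_kf: "cmod (kf a v u) = \<bar>a\<bar> * exp (u \<bullet> v / 2 - (norm v)\<^sup>2 / 4)"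
  by (simp add: kf_def norm_mult norm_exp_eq_Re Re_ip)

lemma norm_diff_sq: "(norm (z - v))\<^sup>2 = (norm z)\<^sup>2 - 2 * (z \<bullet> v) + (norm v)\<^sup>2"
  for z v :: "'a::real_inner"
  by (simp add: power2_norm_eq_inner inner_diff_left inner_diff_right inner_commute)

lemma kf_weight: "(cmod (kf a v z))\<^sup>2 * fock_weight z = a\<^sup>2 * fock_weight (z + (- v))"
proof -
  define X where "X = z \<bullet> v / 2 - (norm v)\<^sup>2 / 4"
  have ee: "(exp X)\<^sup>2 = exp (2 * X)"
    by (simp only: power2_eq_square exp_add[symmetric] mult_2)
  have "(cmod (kf a v z))\<^sup>2 = (\<bar>a\<bar> * exp X)\<^sup>2"
    by (simp only: cmod_kf X_def)
  also have "\<dots> = a\<^sup>2 * exp (2 * X)"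
    by (simp only: power_mult_distrib power2_abs ee)
  finally have c1: "(cmod (kf a v z))\<^sup>2 = a\<^sup>2 * exp (2 * X)" .
  have fw: "fock_weight (z + (- v)) = exp (- ((norm z)\<^sup>2 - 2 * (z \<bullet> v) + (norm v)\<^sup>2) / 2)"
    unfolding fock_weight_def diff_conv_add_uminus[symmetric] norm_diff_sq ..
  have arg: "2 * X + (- (norm z)\<^sup>2 / 2) = - ((norm z)\<^sup>2 - 2 * (z \<bullet> v) + (norm v)\<^sup>2) / 2"
    unfolding X_def by (simp add: field_simps)
  have "(cmod (kf a v z))\<^sup>2 * fock_weight z = a\<^sup>2 * (exp (2 * X) * exp (- (norm z)\<^sup>2 / 2))"
    unfolding c1 fock_weight_def by (simp only: mult.assoc)
  also have "\<dots> = a\<^sup>2 * fock_weight (z + (- v))"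
    unfolding exp_add[symmetric] arg fw ..
  finally show ?thesis .
qed

lemma kf_fock:
  fixes v :: "complex^'d"
  shows "kf a v \<in> fock_space"
  "integral\<^sup>L lborel (\<lambda>z. (cmod (kf a v z))\<^sup>2 * fock_weight z) = a\<^sup>2 * integral\<^sup>L lborel (fock_weight :: complex^'d \<Rightarrow> real)"
proof -
  have tr1: "integral\<^sup>L lborel (\<lambda>z. fock_weight (z + (- v))) = integral\<^sup>L lborel (fock_weight :: complex^'d \<Rightarrow> real)"
    and tr2: "integrable lborel (\<lambda>z::complex^'d. fock_weight (z + (- v)))"
    using translate_integral[OF meas_fock_weight, of "- v"] integrable_fock_weight by auto
  show "integral\<^sup>L lborel (\<lambda>z. (cmod (kf a v z))\<^sup>2 * fock_weight z) = a\<^sup>2 * integral\<^sup>L lborel (fock_weight :: complex^'d \<Rightarrow> real)"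
    unfolding kf_weight by (simp only: integral_mult_right_zero tr1)
  have e: "entire_Cd (kf a v)"
    unfolding kf_def[abs_def] by (rule ent_kf)
  show "kf a v \<in> fock_space"
    using e tr2 by (simp add: fock_space_def kf_weight)
qed

lemma holo_cont: "holo_map \<phi> \<Longrightarrow> continuous_on UNIV \<phi>"
proof -
  assume "holo_map \<phi>"
  then have "\<And>i. continuous_on UNIV (\<lambda>z. \<phi> z $ i)"
    unfolding holo_map_def by (blast intro: ent_cont)
  then have "continuous_on UNIV (\<lambda>z. \<chi> i. \<phi> z $ i)" by (rule continuous_on_vec_lambda)
  then show ?thesis by simp
qed

lemma fixed_point:
  fixes \<phi> :: "complex^'d \<Rightarrow> complex^'d"
  assumes cc: "compact_comp_op \<phi>"
  shows "\<exists>z0. \<phi> z0 = z0"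
proof (rule ccontr)
  assume nf: "\<not> (\<exists>z0. \<phi> z0 = z0)"
  have cop: "comp_op_on_fock \<phi>" using cc by (simp add: compact_comp_op_def)
  have cphi: "continuous_on UNIV \<phi>" using cop by (simp add: comp_op_on_fock_def holo_cont)
  have "\<exists>w. norm w \<le> real n \<and> norm (\<phi> w) > real n" for n :: nat
  proof (rule ccontr)
    assume "\<not> (\<exists>w. norm w \<le> real n \<and> norm (\<phi> w) > real n)"
    then have "\<phi> \<in> cball 0 (real n) \<rightarrow> cball 0 (real n)" by (auto simp: not_less)
    moreover have "continuous_on (cball 0 (real n)) \<phi>" using cphi by (rule continuous_on_subset) auto
    ultimately obtain x where "\<phi> x = x"
      using brouwer[of "cball 0 (real n)" \<phi>] by auto
    then show False using nf by blast
  qed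
  then obtain w where w: "\<And>n. norm (w n) \<le> real n \<and> norm (\<phi> (w n)) > real n" by metis
  define v where "v n = \<phi> (w n)" for n
  define W where "W = integral\<^sup>L lborel (fock_weight :: complex^'d \<Rightarrow> real)"
  define K where "K = (2*pi) powi (- int CARD('d))"
  have Wp: "W > 0" unfolding W_def by (rule W_pos)
  have Kp: "K > 0" unfolding K_def by simp
  define \<alpha> where "\<alpha> = 1 / sqrt (K * W)"
  have \<alpha>p: "\<alpha> > 0" unfolding \<alpha>_def using Wp Kp by simp
  have a2: "K * (\<alpha>\<^sup>2 * W) = 1"
    unfolding \<alpha>_def using Wp Kp by (simp add: power_divide)
  define s where "s n = kf \<alpha> (v n)" for n
  have sF: "s n \<in> fock_space" for n by (simp add: s_def kf_fock)
  have sN: "fock_norm (s n) \<le> 1" for n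
    unfolding fock_norm_def s_def kf_fock(2) using a2 by (simp add: K_def W_def)
  have "\<forall>s::nat \<Rightarrow> complex^'d \<Rightarrow> complex. (\<forall>n. s n \<in> fock_space \<and> fock_norm (s n) \<le> 1) \<longrightarrow>
        (\<exists>r g. strict_mono r \<and> g \<in> fock_space \<and> (\<lambda>n. fock_norm (\<lambda>z. s (r n) (\<phi> z) - g z)) \<longlonglongrightarrow> 0)"
    using cc by (simp add: compact_comp_op_def)
  from this[rule_format, of s] sF sN
  obtain r g where r: "strict_mono r" and gF: "g \<in> fock_space"
    and lim: "(\<lambda>n. fock_norm (\<lambda>z. s (r n) (\<phi> z) - g z)) \<longlonglongrightarrow> 0"
    by blast
  define D where "D n z = s (r n) (\<phi> z) - g z" for n z
  have DF: "D n \<in> fock_space" for n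
  proof -
    have "s (r n) \<circ> \<phi> \<in> fock_space" using cop sF by (simp add: comp_op_on_fock_def)
    then show ?thesis unfolding D_def[abs_def] using fock_diff[OF _ gF, of "s (r n) \<circ> \<phi>"] by (simp add: comp_def)
  qed
  have limD: "(\<lambda>n. fock_norm (D n)) \<longlonglongrightarrow> 0" using lim by (simp add: D_def[abs_def])
  define C where "C z = exp ((norm z)\<^sup>2 / 2) * (2 * pi) ^ CARD('d)" for z :: "complex^'d"
  have Cp: "C z > 0" for z by (simp add: C_def)
  have pe: "(cmod (D n z))\<^sup>2 * W \<le> C z * (fock_norm (D n))\<^sup>2" for n z
    using point_eval2[OF DF[of n], of z] by (simp add: W_def C_def mult.assoc)
  have g0: "g z = 0" for z
  proof -
    define M where "M = sqrt (C z / W)"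
    have M0: "M \<ge> 0" unfolding M_def using Cp[of z] Wp by simp
    have bnd: "cmod (D n z) \<le> M * fock_norm (D n)" for n
    proof -
      have "(cmod (D n z))\<^sup>2 \<le> (C z / W) * (fock_norm (D n))\<^sup>2"
        using pe[of n z] Wp by (simp add: field_simps)
      also have "\<dots> = (M * fock_norm (D n))\<^sup>2"
        using Wp Cp[of z] by (simp add: M_def power_mult_distrib)
      finally show ?thesis
        by (rule power2_le_imp_le) (simp add: M0 fock_norm_nonneg)
    qed
    have t1: "(\<lambda>n. D n z) \<longlonglongrightarrow> 0"
    proof (rule Lim_null_comparison)
      show "\<forall>\<^sub>F n in sequentially. norm (D n z) \<le> M * fock_norm (D n)" using bnd by simp
      show "(\<lambda>n. M * fock_norm (D n)) \<longlonglongrightarrow> 0"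
        using tendsto_mult[OF tendsto_const limD, of M] by simp
    qed
    have t2: "(\<lambda>n. s (r n) (\<phi> z)) \<longlonglongrightarrow> 0"
    proof -
      define u where "u = \<phi> z"
      define a where "a = norm u"
      define q where "q n = norm (v (r n))" for n
      have qn: "real n \<le> q n" for n
      proof -
        have "real n \<le> real (r n)" using seq_suble[OF r, of n] by simp
        also have "\<dots> < q n" using w[of "r n"] by (simp add: q_def v_def)
        finally show ?thesis by simp
      qed
      have qlim: "filterlim q at_top sequentially"
        by (rule filterlim_at_top_mono[OF filterlim_real_sequentially]) (use qn in simp)
      have as: "((\<lambda>x::real. \<alpha> * exp (a * x / 2 - x\<^sup>2 / 4)) \<longlongrightarrow> 0) at_top" by real_asymp
      have c2: "((\<lambda>n. \<alpha> * exp (a * q n / 2 - (q n)\<^sup>2 / 4)) \<longlongrightarrow> 0) sequentially"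
        using filterlim_compose[OF as qlim] by (simp add: comp_def)
      show ?thesis
      proof (rule Lim_null_comparison[OF _ c2])
        show "\<forall>\<^sub>F n in sequentially. norm (s (r n) (\<phi> z)) \<le> \<alpha> * exp (a * q n / 2 - (q n)\<^sup>2 / 4)"
        proof (rule always_eventually, rule allI)
          fix n
          have "u \<bullet> v (r n) \<le> a * q n" unfolding a_def q_def by (rule norm_cauchy_schwarz)
          then have "exp (u \<bullet> v (r n) / 2 - (norm (v (r n)))\<^sup>2 / 4) \<le> exp (a * q n / 2 - (q n)\<^sup>2 / 4)"
            by (simp add: q_def divide_right_mono)
          then show "norm (s (r n) (\<phi> z)) \<le> \<alpha> * exp (a * q n / 2 - (q n)\<^sup>2 / 4)"
            using \<alpha>p by (simp add: s_def cmod_kf u_def)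
        qed
      qed
    qed
    have "(\<lambda>n. s (r n) (\<phi> z) - D n z) \<longlonglongrightarrow> 0 - 0" by (intro tendsto_diff t2 t1)
    moreover have "(\<lambda>n. s (r n) (\<phi> z) - D n z) = (\<lambda>n. g z)" by (simp add: D_def)
    ultimately have "(\<lambda>n. g z) \<longlonglongrightarrow> 0" by simp
    then show "g z = 0" by (simp add: LIMSEQ_const_iff)
  qed
  have key: "\<alpha>\<^sup>2 * W \<le> (2 * pi) ^ CARD('d) * (fock_norm (D n))\<^sup>2" for n
  proof -
    define m where "m = r n"
    define V where "V = (norm (v m))\<^sup>2"
    have Dw: "D n (w m) = s m (v m)" by (simp add: D_def g0 v_def m_def)
    have cm: "cmod (s m (v m)) = \<alpha> * exp (V / 4)"
    proof -
      have "v m \<bullet> v m = V" by (simp add: V_def power2_norm_eq_inner)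
      then show ?thesis using \<alpha>p by (simp add: s_def cmod_kf V_def)
    qed
    have sq: "(\<alpha> * exp (V / 4))\<^sup>2 = \<alpha>\<^sup>2 * exp (V / 2)"
      by (simp add: power_mult_distrib power2_eq_square exp_add[symmetric])
    have "(cmod (D n (w m)))\<^sup>2 * W \<le> C (w m) * (fock_norm (D n))\<^sup>2" by (rule pe)
    then have h1: "\<alpha>\<^sup>2 * exp (V / 2) * W \<le> exp ((norm (w m))\<^sup>2 / 2) * ((2 * pi) ^ CARD('d) * (fock_norm (D n))\<^sup>2)"
      by (simp add: Dw cm sq C_def mult.assoc)
    have wv: "(norm (w m))\<^sup>2 \<le> V"
    proof -
      have "norm (w m) \<le> norm (v m)" using w[of m] by (simp add: v_def)
      then show ?thesis unfolding V_def by (simp add: power_mono)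
    qed
    have "exp ((norm (w m))\<^sup>2 / 2) \<le> exp (V / 2)" using wv by simp
    then have "exp ((norm (w m))\<^sup>2 / 2) * ((2 * pi) ^ CARD('d) * (fock_norm (D n))\<^sup>2)
        \<le> exp (V / 2) * ((2 * pi) ^ CARD('d) * (fock_norm (D n))\<^sup>2)"
      by (rule mult_right_mono) simp
    moreover have "exp (V / 2) * (\<alpha>\<^sup>2 * W) = \<alpha>\<^sup>2 * exp (V / 2) * W" by (simp only: ac_simps)
    ultimately have "exp (V / 2) * (\<alpha>\<^sup>2 * W) \<le> exp (V / 2) * ((2 * pi) ^ CARD('d) * (fock_norm (D n))\<^sup>2)"
      using h1 by linarith
    then show ?thesis by (simp only: mult_le_cancel_left_pos exp_gt_zero)
  qed
  have "(\<lambda>n. (2 * pi) ^ CARD('d) * (fock_norm (D n))\<^sup>2) \<longlonglongrightarrow> (2 * pi) ^ CARD('d) * 0\<^sup>2"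
    by (intro tendsto_intros limD)
  moreover have "\<alpha>\<^sup>2 * W > 0" using \<alpha>p Wp by simp
  ultimately have "\<forall>\<^sub>F n in sequentially. (2 * pi) ^ CARD('d) * (fock_norm (D n))\<^sup>2 < \<alpha>\<^sup>2 * W"
    by (intro order_tendstoD(2)) simp_all
  then obtain n where "(2 * pi) ^ CARD('d) * (fock_norm (D n))\<^sup>2 < \<alpha>\<^sup>2 * W"
    by (meson eventually_sequentially order_refl)
  with key[of n] show False by simp
qed

theorem mainTheorem15:
  fixes \<phi> :: "complex^'d \<Rightarrow> complex^'d"
  assumes "compact_comp_op \<phi>" and "cyclic_op \<phi>"
  shows "\<not> (\<exists>f\<in>fock_space. \<exists>g\<in>fock_space.
            (\<forall>a b. (\<lambda>z. a * f z + b * g z) = (\<lambda>z. 0) \<longrightarrow> a = 0 \<and> b = 0) \<and>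
            (\<forall>a b. (\<lambda>z. a * f z + b * g z) = (\<lambda>z. 0) \<or>
                   cyclic_vec \<phi> (\<lambda>z. a * f z + b * g z)))"
proof
  assume "\<exists>f\<in>fock_space. \<exists>g\<in>fock_space.
            (\<forall>a b. (\<lambda>z. a * f z + b * g z) = (\<lambda>z. 0) \<longrightarrow> a = 0 \<and> b = 0) \<and>
            (\<forall>a b. (\<lambda>z. a * f z + b * g z) = (\<lambda>z. 0) \<or>
                   cyclic_vec \<phi> (\<lambda>z. a * f z + b * g z))"
  then obtain f g :: "complex^'d \<Rightarrow> complex" where
    indep: "\<forall>a b. (\<lambda>z. a * f z + b * g z) = (\<lambda>z. 0) \<longrightarrow> a = 0 \<and> b = 0"
    and allc: "\<forall>a b. (\<lambda>z. a * f z + b * g z) = (\<lambda>z. 0) \<or> cyclic_vec \<phi> (\<lambda>z. a * f z + b * g z)"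
    by blast
  have cop: "comp_op_on_fock \<phi>" using assms(1) by (simp add: compact_comp_op_def)
  obtain z0 where fix0: "\<phi> z0 = z0" using fixed_point[OF assms(1)] by blast
  obtain a b where ab1: "\<not> (a = 0 \<and> b = 0)" and ab2: "a * f z0 + b * g z0 = 0"
  proof (cases "f z0 = 0")
    case True
    then show ?thesis using that[of 1 0] by simp
  next
    case False
    then show ?thesis using that[of "g z0" "- f z0"] by (simp add: mult.commute)
  qed
  have "(\<lambda>z. a * f z + b * g z) \<noteq> (\<lambda>z. 0)" using indep ab1 by blast
  then have "cyclic_vec \<phi> (\<lambda>z. a * f z + b * g z)" using allc by blast
  moreover have "\<not> cyclic_vec \<phi> (\<lambda>z. a * f z + b * g z)"
    by (rule not_cyclic[OF cop fix0]) (simp add: ab2)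
  ultimately show False by blast
qed

end
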